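(* For $n\in\mathbb{N}$ let $a_n,b_n,c_n,d_n$ be real random variables with $c_n\ge0$, $d_n\ge0$ a.s., and let $(k_n)$ be a deterministic integer sequence with $k_n\to\infty$. Define $X_n=e^{ia_n-c_n}$, $x_n=\mathbb{E}[X_n]$, $Y_n=e^{ib_n-d_n}$, $y_n=\mathbb{E}[Y_n]$, $z_n=\mathbb{E}[X_nY_n]$. If $x_n-1=O(1/k_n)$, $y_n-1=o(1/k_n)$ and $z_n-1=O(1/k_n)$ as $n\to\infty$, then $z_n^{k_n}-x_n^{k_n}=o(1)$. *)

theory Defs
  imports "HOL-Probability.Probability" "HOL-Library.Landau_Symbols"
begin

end

theory Submission
  imports Defs
begin

lemma norm_sub1_sq: fixes u :: complex assumes "cmod u \<le> 1"
  shows "(cmod (u - 1))^2 \<le> 2 * Re (1 - u)"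
proof -
  have "(cmod u)^2 \<le> 1" using assms by (simp add: power_le_one)
  hence "Re u ^2 + Im u ^2 \<le> 1" by (simp add: cmod_power2)
  moreover have "(cmod (u - 1))^2 = (Re u - 1)^2 + Im u ^2" by (simp add: cmod_power2)
  ultimately show ?thesis by (simp add: power2_eq_square algebra_simps)
qed

lemma re_aux: "1 - Re (w::complex) \<le> cmod (w - 1)"
  using complex_Re_le_cmod[of "1 - w"] by (simp add: norm_minus_commute)

lemma amgm_t: fixes p q t :: real assumes "t > 0"
  shows "p * q \<le> (t * p^2 + q^2 / t) / 2"
proof -
  have "0 \<le> (t * p - q)^2 / t" using assms by simp
  also have "(t * p - q)^2 / t = t * p^2 - 2 * p * q + q^2 / t" using assms
    by (simp add: power2_eq_square field_simps)
  finally show ?thesis by simp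
qed

lemma key:
  fixes U V :: "'s \<Rightarrow> complex"
  assumes P: "prob_space M" and mU: "U \<in> borel_measurable M" and mV: "V \<in> borel_measurable M"
    and bU: "AE \<omega> in M. cmod (U \<omega>) \<le> 1" and bV: "AE \<omega> in M. cmod (V \<omega>) \<le> 1" and t: "t > 0"
  shows "cmod ((LINT \<omega>|M. U \<omega> * V \<omega>) - (LINT \<omega>|M. U \<omega>)) \<le>
     cmod ((LINT \<omega>|M. V \<omega>) - 1) + t * cmod ((LINT \<omega>|M. U \<omega>) - 1) + cmod ((LINT \<omega>|M. V \<omega>) - 1) / t"
proof -
  interpret prob_space M by fact
  have i1: "integrable M (\<lambda>_. 1::real)" by simp
  have iU: "integrable M U"
    by (rule Bochner_Integration.integrable_bound[OF i1 mU]) (use bU in auto)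
  have iV: "integrable M V"
    by (rule Bochner_Integration.integrable_bound[OF i1 mV]) (use bV in auto)
  have iUV: "integrable M (\<lambda>\<omega>. U \<omega> * V \<omega>)"
    by (rule Bochner_Integration.integrable_bound[OF i1]) (use mU mV in measurable, use bU bV in \<open>eventually_elim, auto simp: norm_mult intro: mult_le_one\<close>)
  define W where "W \<omega> = (U \<omega> - 1) * (V \<omega> - 1)" for \<omega>
  have WW: "W = (\<lambda>\<omega>. U \<omega> * V \<omega> - U \<omega> - V \<omega> + 1)" unfolding W_def by (auto simp: algebra_simps)
  have iW: "integrable M W" unfolding WW using iU iV iUV by simp
  have EW: "integral\<^sup>L M W = (LINT \<omega>|M. U \<omega> * V \<omega>) - (LINT \<omega>|M. U \<omega>) - (LINT \<omega>|M. V \<omega>) + 1"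
    unfolding WW using iU iV iUV by (simp add: prob_space)
  define R where "R \<omega> = t * Re (1 - U \<omega>) + Re (1 - V \<omega>) / t" for \<omega>
  have iR: "integrable M R" unfolding R_def using iU iV by simp
  have ER: "integral\<^sup>L M R = t * Re (1 - (LINT \<omega>|M. U \<omega>)) + Re (1 - (LINT \<omega>|M. V \<omega>)) / t"
    unfolding R_def using iU iV by (simp add: prob_space)
  have pw: "AE \<omega> in M. cmod (W \<omega>) \<le> R \<omega>"
    using bU bV
  proof eventually_elim
    case (elim \<omega>)
    have "cmod (W \<omega>) = cmod (U \<omega> - 1) * cmod (V \<omega> - 1)" by (simp add: W_def norm_mult)
    also have "\<dots> \<le> (t * (cmod (U \<omega> - 1))^2 + (cmod (V \<omega> - 1))^2 / t) / 2" by (rule amgm_t[OF t])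
    also have "\<dots> \<le> (t * (2 * Re (1 - U \<omega>)) + (2 * Re (1 - V \<omega>)) / t) / 2"
      using norm_sub1_sq[OF elim(1)] norm_sub1_sq[OF elim(2)] t
      by (intro divide_right_mono add_mono mult_left_mono divide_right_mono) auto
    also have "\<dots> = R \<omega>" using t by (simp add: R_def field_simps)
    finally show ?case .
  qed
  have "cmod (integral\<^sup>L M W) \<le> (LINT \<omega>|M. cmod (W \<omega>))" by (rule Bochner_Integration.integral_norm_bound)
  also have "\<dots> \<le> integral\<^sup>L M R" by (rule integral_mono_AE[OF _ iR pw]) (use iW in simp)
  also have "\<dots> \<le> t * cmod ((LINT \<omega>|M. U \<omega>) - 1) + cmod ((LINT \<omega>|M. V \<omega>) - 1) / t"
    unfolding ER using t
    by (intro add_mono mult_left_mono divide_right_mono) (auto intro: re_aux)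
  finally have "cmod (integral\<^sup>L M W) \<le> \<dots>" .
  moreover have "(LINT \<omega>|M. U \<omega> * V \<omega>) - (LINT \<omega>|M. U \<omega>) = ((LINT \<omega>|M. V \<omega>) - 1) + integral\<^sup>L M W"
    unfolding EW by simp
  ultimately show ?thesis using norm_triangle_ineq[of "(LINT \<omega>|M. V \<omega>) - 1" "integral\<^sup>L M W"] by simp
qed

lemma pow_diff_bound: fixes z x :: complex assumes "cmod z \<le> 1" "cmod x \<le> 1"
  shows "cmod (z ^ m - x ^ m) \<le> real m * cmod (z - x)"
proof (induction m)
  case 0 then show ?case by simp
next
  case (Suc m)
  have "z ^ Suc m - x ^ Suc m = z * (z ^ m - x ^ m) + (z - x) * x ^ m" by (simp add: algebra_simps)
  hence "cmod (z ^ Suc m - x ^ Suc m) \<le> cmod z * cmod (z ^ m - x ^ m) + cmod (z - x) * cmod x ^ m"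
    by (metis norm_mult norm_power norm_triangle_ineq)
  also have "\<dots> \<le> 1 * (real m * cmod (z - x)) + cmod (z - x) * 1"
    using assms Suc by (intro add_mono mult_mono mult_left_mono power_le_one) auto
  finally show ?case by (simp add: algebra_simps)
qed


lemma exp_bound1:
  fixes f :: "'s \<Rightarrow> complex"
  assumes P: "prob_space M" and m: "f \<in> borel_measurable M" and b: "AE \<omega> in M. cmod (f \<omega>) \<le> 1"
  shows "cmod (LINT \<omega>|M. f \<omega>) \<le> 1"
proof -
  interpret prob_space M by fact
  have i1: "integrable M (\<lambda>_. 1::real)" by simp
  have iF: "integrable M f"
    by (rule Bochner_Integration.integrable_bound[OF i1 m]) (use b in auto)
  have "cmod (LINT \<omega>|M. f \<omega>) \<le> (LINT \<omega>|M. cmod (f \<omega>))" by (rule Bochner_Integration.integral_norm_bound)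
  also have "\<dots> \<le> (LINT \<omega>|M. 1)" by (rule integral_mono_AE[OF _ i1 b]) (use iF in simp)
  also have "\<dots> = 1" by (simp add: prob_space)
  finally show ?thesis .
qed

theorem lemmaA3:
  fixes M :: "'s measure"
    and a b c d :: "nat \<Rightarrow> 's \<Rightarrow> real"
    and k :: "nat \<Rightarrow> int"
    and X Y :: "nat \<Rightarrow> 's \<Rightarrow> complex"
    and x y z :: "nat \<Rightarrow> complex"
  assumes "prob_space M"
    and "\<And>n. a n \<in> borel_measurable M"
    and "\<And>n. b n \<in> borel_measurable M"
    and "\<And>n. c n \<in> borel_measurable M"
    and "\<And>n. d n \<in> borel_measurable M"
    and "\<And>n. AE \<omega> in M. c n \<omega> \<ge> 0"
    and "\<And>n. AE \<omega> in M. d n \<omega> \<ge> 0"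
    and "filterlim k at_top sequentially"
    and X_def: "\<And>n \<omega>. X n \<omega> = exp (\<i> * of_real (a n \<omega>) - of_real (c n \<omega>))"
    and Y_def: "\<And>n \<omega>. Y n \<omega> = exp (\<i> * of_real (b n \<omega>) - of_real (d n \<omega>))"
    and x_def: "\<And>n. x n = (LINT \<omega>|M. X n \<omega>)"
    and y_def: "\<And>n. y n = (LINT \<omega>|M. Y n \<omega>)"
    and z_def: "\<And>n. z n = (LINT \<omega>|M. X n \<omega> * Y n \<omega>)"
    and "(\<lambda>n. x n - 1) \<in> O(\<lambda>n. 1 / of_int (k n))"
    and "(\<lambda>n. y n - 1) \<in> o(\<lambda>n. 1 / of_int (k n))"
    and "(\<lambda>n. z n - 1) \<in> O(\<lambda>n. 1 / of_int (k n))"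
  shows "(\<lambda>n. z n powi k n - x n powi k n) \<in> o(\<lambda>n. 1)"
proof -
  note P = assms(1)
  have XX: "X n = (\<lambda>\<omega>. exp (\<i> * of_real (a n \<omega>) - of_real (c n \<omega>)))" for n using X_def by auto
  have YY: "Y n = (\<lambda>\<omega>. exp (\<i> * of_real (b n \<omega>) - of_real (d n \<omega>)))" for n using Y_def by auto
  have mX: "X n \<in> borel_measurable M" for n unfolding XX using assms(2,4) by measurable
  have mY: "Y n \<in> borel_measurable M" for n unfolding YY using assms(3,5) by measurable
  have bX: "AE \<omega> in M. cmod (X n \<omega>) \<le> 1" for n
    using assms(6)[of n] by eventually_elim (simp add: X_def norm_exp_eq_Re)
  have bY: "AE \<omega> in M. cmod (Y n \<omega>) \<le> 1" for n
    using assms(7)[of n] by eventually_elim (simp add: Y_def norm_exp_eq_Re)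
  have mXY: "(\<lambda>\<omega>. X n \<omega> * Y n \<omega>) \<in> borel_measurable M" for n using mX mY by measurable
  have bXY: "AE \<omega> in M. cmod (X n \<omega> * Y n \<omega>) \<le> 1" for n
    using bX[of n] bY[of n] by eventually_elim (auto simp: norm_mult intro: mult_le_one)
  have nx: "cmod (x n) \<le> 1" for n unfolding x_def by (rule exp_bound1[OF P mX bX])
  have nz: "cmod (z n) \<le> 1" for n unfolding z_def by (rule exp_bound1[OF P mXY bXY])
  have kb: "t > 0 \<Longrightarrow> cmod (z n - x n) \<le> cmod (y n - 1) + t * cmod (x n - 1) + cmod (y n - 1) / t" for n t
    unfolding x_def y_def z_def by (rule key[OF P mX mY bX bY])
  obtain C where C: "C > 0" "eventually (\<lambda>n. cmod (x n - 1) \<le> C * cmod (1 / of_int (k n) :: complex)) sequentially"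
    using landau_o.bigE[OF assms(14)] by blast
  have kpos: "eventually (\<lambda>n. k n \<ge> 1) sequentially"
    using assms(8) by (simp add: filterlim_at_top)
  show ?thesis
  proof (rule landau_o.smallI)
    fix \<eta> :: real assume eta: "\<eta> > 0"
    define t where "t = \<eta> / (3 * C)"
    have t: "t > 0" using eta C by (simp add: t_def)
    define \<delta> where "\<delta> = min (\<eta>/3) (t * \<eta> / 3)"
    have dl: "\<delta> > 0" using eta t by (simp add: \<delta>_def)
    have ev: "eventually (\<lambda>n. cmod (y n - 1) \<le> \<delta> * cmod (1 / of_int (k n) :: complex)) sequentially"
      using landau_o.smallD[OF assms(15) dl] .
    show "eventually (\<lambda>n. cmod (z n powi k n - x n powi k n) \<le> \<eta> * cmod (1::complex)) sequentially"
      using ev C(2) kpos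
    proof eventually_elim
      case (elim n)
      define K where "K = real_of_int (k n)"
      have K: "K \<ge> 1" using elim(3) by (simp add: K_def)
      have n1: "cmod (1 / of_int (k n) :: complex) = 1 / K"
        using K by (simp add: K_def norm_divide)
      have A: "K * cmod (x n - 1) \<le> C" using elim(2) K unfolding n1 by (simp add: field_simps)
      have B: "K * cmod (y n - 1) \<le> \<delta>" using elim(1) K unfolding n1 by (simp add: field_simps)
      have pw: "z n powi k n - x n powi k n = z n ^ nat (k n) - x n ^ nat (k n)"
        using elim(3) by (simp add: power_int_def)
      have "cmod (z n powi k n - x n powi k n) \<le> real (nat (k n)) * cmod (z n - x n)"
        unfolding pw by (rule pow_diff_bound[OF nz nx])
      also have "real (nat (k n)) = K" using K by (simp add: K_def)
      also have "K * cmod (z n - x n) \<le> K * (cmod (y n - 1) + t * cmod (x n - 1) + cmod (y n - 1) / t)"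
        using K kb[OF t, of n] by (intro mult_left_mono) auto
      also have "\<dots> = K * cmod (y n - 1) + t * (K * cmod (x n - 1)) + (K * cmod (y n - 1)) / t"
        by (simp add: algebra_simps)
      also have "\<dots> \<le> \<delta> + t * C + \<delta> / t"
        using A B t by (intro add_mono mult_left_mono divide_right_mono) auto
      also have "\<dots> \<le> \<eta>/3 + \<eta>/3 + \<eta>/3"
      proof -
        have "\<delta> \<le> \<eta>/3" by (simp add: \<delta>_def)
        moreover have "t * C = \<eta>/3" using C by (simp add: t_def)
        moreover have "\<delta> / t \<le> \<eta>/3" proof -
          have "\<delta> \<le> t * \<eta> / 3" by (simp add: \<delta>_def)
          thus ?thesis using t by (simp add: divide_le_eq mult.commute)
        qed
        ultimately show ?thesis by linarith
      qed
      finally show ?case by simp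
    qed
  qed
qed

end
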